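(* Let $A\in \mathbb{Z}^{m\times n}$, $b\in \mathbb{Z}^m$, and suppose $P:=\{x:Ax\leq b\}$ is nonempty. For a nonempty face $F$ of $P$, let $A_Fx\le b_F$ be the subsystem of $Ax\le b$ consisting of the inequalities satisfied with equality by all points of $F$. Then the following are equivalent for a prime $p$: (1) $P$ is a $p$-adic polyhedron; (2) for every nonempty face $F$ of $P$, the affine hull of $F$ contains a $p$-adic point; (3) for every nonempty face $F$ of $P$ and every real vector $z$, if $A_F^\top z$ is integral then $b_F^\top z$ is $p$-adic; (4) for all $w\in\mathbb{R}^n$ for which $\max\{w^\top x:x\in P\}$ has an optimum, it has a $p$-adic optimal solution; (5) for all $w\in\mathbb{Z}^n$ for which $\max\{w^\top x:x\in P\}$ has an optimum, its optimal value is $p$-adic.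
   Context: A $p$-adic rational is a number $a/p^k$ with $a,k\in\mathbb{Z}$, $k\ge0$; a vector is $p$-adic if all entries are $p$-adic rationals. A nonempty rational polyhedron is $p$-adic if every nonempty face of it contains a $p$-adic point. *)

theory Defs
  imports "HOL-Analysis.Analysis" "HOL-Computational_Algebra.Primes"
begin

definition padic_rat :: "nat \<Rightarrow> real \<Rightarrow> bool" where
  "padic_rat p q \<longleftrightarrow> (\<exists>(a::int) (k::nat). q = of_int a / of_nat p ^ k)"

definition padic_vec :: "nat \<Rightarrow> real ^ 'n \<Rightarrow> bool" where
  "padic_vec p x \<longleftrightarrow> (\<forall>i. padic_rat p (x $ i))"

definition rational_polyhedron :: "(real ^ 'n) set \<Rightarrow> bool" where
  "rational_polyhedron P \<longleftrightarrow>
     (\<exists>cs :: ((real ^ 'n) \<times> real) list.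
        (\<forall>(a, \<beta>) \<in> set cs. (\<forall>i. a $ i \<in> \<rat>) \<and> \<beta> \<in> \<rat>) \<and>
        P = {x. \<forall>(a, \<beta>) \<in> set cs. a \<bullet> x \<le> \<beta>})"

definition padic_polyhedron :: "nat \<Rightarrow> (real ^ 'n) set \<Rightarrow> bool" where
  "padic_polyhedron p P \<longleftrightarrow> rational_polyhedron P \<and> P \<noteq> {} \<and>
     (\<forall>F. F face_of P \<and> F \<noteq> {} \<longrightarrow> (\<exists>x\<in>F. padic_vec p x))"

definition polyh :: "int ^ 'n ^ 'm \<Rightarrow> int ^ 'm \<Rightarrow> (real ^ 'n) set" where
  "polyh A b = {x. \<forall>i. (\<Sum>j\<in>UNIV. of_int (A $ i $ j) * x $ j) \<le> of_int (b $ i)}"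

definition tight_rows :: "int ^ 'n ^ 'm \<Rightarrow> int ^ 'm \<Rightarrow> (real ^ 'n) set \<Rightarrow> 'm set" where
  "tight_rows A b F = {i. \<forall>x\<in>F. (\<Sum>j\<in>UNIV. of_int (A $ i $ j) * x $ j) = of_int (b $ i)}"

definition is_max_sol :: "(real ^ 'n) set \<Rightarrow> real ^ 'n \<Rightarrow> real ^ 'n \<Rightarrow> bool" where
  "is_max_sol P w x \<longleftrightarrow> x \<in> P \<and> (\<forall>y\<in>P. w \<bullet> y \<le> w \<bullet> x)"

end

theory Submission
  imports Defs
begin


lemma padic_int: "padic_rat p (of_int a)"
  unfolding padic_rat_def by (rule exI[of _ a], rule exI[of _ 0], simp)

lemma padic_add: assumes "p > 0" "padic_rat p x" "padic_rat p y" shows "padic_rat p (x + y)"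
proof -
  obtain a k b l where x: "x = of_int a / of_nat p ^ k" and y: "y = of_int b / of_nat p ^ l"
    using assms unfolding padic_rat_def by blast
  show ?thesis unfolding padic_rat_def
    by (rule exI[of _ "a * int p ^ l + b * int p ^ k"], rule exI[of _ "k+l"])
      (use assms in \<open>simp add: x y field_simps power_add\<close>)
qed

lemma padic_mult: assumes "p > 0" "padic_rat p x" "padic_rat p y" shows "padic_rat p (x * y)"
proof -
  obtain a k b l where x: "x = of_int a / of_nat p ^ k" and y: "y = of_int b / of_nat p ^ l"
    using assms unfolding padic_rat_def by blast
  show ?thesis unfolding padic_rat_def
    by (rule exI[of _ "a * b"], rule exI[of _ "k+l"])
      (use assms in \<open>simp add: x y field_simps power_add\<close>)
qed

lemma padic_uminus: assumes "padic_rat p x" shows "padic_rat p (- x)"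
proof -
  obtain a k where x: "x = of_int a / of_nat p ^ k"
    using assms unfolding padic_rat_def by blast
  show ?thesis unfolding padic_rat_def
    by (rule exI[of _ "- a"], rule exI[of _ "k"]) (simp add: x)
qed

lemma padic_diff: assumes "p > 0" "padic_rat p x" "padic_rat p y" shows "padic_rat p (x - y)"
  using padic_add[OF assms(1,2) padic_uminus[OF assms(3)]] by simp

lemma padic_Ints: "x \<in> \<int> \<Longrightarrow> padic_rat p x"
  by (metis Ints_cases padic_int)

lemma padic_sum: assumes "p > 0" "\<And>i. i \<in> S \<Longrightarrow> padic_rat p (f i)" shows "padic_rat p (sum f S)"
  using assms(2)
proof (induction S rule: infinite_finite_induct)
  case (infinite A) then show ?case using padic_int[of p 0] by simp
next
  case empty then show ?case using padic_int[of p 0] by simp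
next
  case (insert x F) then show ?case using padic_add[OF assms(1)] by simp
qed

lemma padic_not: assumes "prime p" shows "\<not> padic_rat p (1 / (of_nat p + 1))"
proof
  assume "padic_rat p (1 / (of_nat p + 1))"
  then obtain a k where h: "1 / (of_nat p + 1) = (of_int a / of_nat p ^ k :: real)"
    unfolding padic_rat_def by blast
  have p0: "p > 0" using assms prime_gt_0_nat by blast
  have "of_int (int p ^ k) = (of_int (a * (int p + 1)) :: real)"
    using h p0 by (simp add: field_simps)
  then have e: "int p ^ k = a * (int p + 1)" by (metis of_int_eq_iff)
  have "coprime (int p + 1) (int p)" by simp
  then have "coprime (int p + 1) (int p ^ k)" by simp
  moreover have "(int p + 1) dvd int p ^ k" using e by simp
  ultimately have "is_unit (int p + 1)" by (meson coprime_common_divisor dvd_refl)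
  then show False using p0 by simp
qed

lemma padic_dense: assumes "prime p" "e > 0" shows "\<exists>q. padic_rat p q \<and> \<bar>q - r\<bar> < e"
proof -
  have p1: "(1::real) < of_nat p" using assms prime_gt_1_nat by simp
  obtain k where k: "1 / e < (of_nat p :: real) ^ k" using real_arch_pow[OF p1] by blast
  define N where "N = (of_nat p :: real) ^ k"
  have N0: "N > 0" using p1 N_def by simp
  define q where "q = of_int \<lfloor>r * N\<rfloor> / N"
  have "padic_rat p q" unfolding padic_rat_def q_def N_def by blast
  moreover have "\<bar>q - r\<bar> < e"
  proof -
    have a: "of_int \<lfloor>r * N\<rfloor> \<le> r * N" "r * N < of_int \<lfloor>r * N\<rfloor> + 1" by linarith+
    have "\<bar>q - r\<bar> = \<bar>of_int \<lfloor>r * N\<rfloor> - r * N\<bar> / N" using N0 by (simp add: q_def field_simps)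
    also have "\<dots> < 1 / N" 
    proof -
      have "\<bar>of_int \<lfloor>r * N\<rfloor> - r * N\<bar> < 1" using a by linarith
      then show ?thesis using N0 by (intro divide_strict_right_mono) auto
    qed
    also have "\<dots> < e" using k N0 assms(2) unfolding N_def by (simp add: field_simps)
    finally show ?thesis .
  qed
  ultimately show ?thesis by blast
qed


definition Cnd :: "nat \<Rightarrow> 'i set \<Rightarrow> 'j set \<Rightarrow> ('i \<Rightarrow> 'j \<Rightarrow> int) \<Rightarrow> ('i \<Rightarrow> real) \<Rightarrow> bool" where
  "Cnd p I J M c \<longleftrightarrow> (\<forall>z::'i\<Rightarrow>real. (\<forall>j\<in>J. (\<Sum>i\<in>I. z i * of_int (M i j)) \<in> \<int>) \<longrightarrow>
       padic_rat p (\<Sum>i\<in>I. z i * c i))"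

definition Sol :: "'i set \<Rightarrow> 'j set \<Rightarrow> ('i \<Rightarrow> 'j \<Rightarrow> int) \<Rightarrow> ('i \<Rightarrow> real) \<Rightarrow> ('j \<Rightarrow> real) \<Rightarrow> bool" where
  "Sol I J M c x \<longleftrightarrow> (\<forall>i\<in>I. (\<Sum>j\<in>J. of_int (M i j) * x j) = c i)"

definition PV :: "nat \<Rightarrow> 'j set \<Rightarrow> ('j \<Rightarrow> real) \<Rightarrow> bool" where
  "PV p J x \<longleftrightarrow> (\<forall>j\<in>J. padic_rat p (x j))"

definition Good :: "nat \<Rightarrow> 'i set \<Rightarrow> 'j set \<Rightarrow> ('i \<Rightarrow> 'j \<Rightarrow> int) \<Rightarrow> ('i \<Rightarrow> real) \<Rightarrow> bool" where
  "Good p I J M c \<longleftrightarrow> (\<exists>x. PV p J x \<and> Sol I J M c x) \<and>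
     (\<forall>y e. Sol I J M c y \<longrightarrow> e > 0 \<longrightarrow> (\<exists>x. PV p J x \<and> Sol I J M c x \<and> (\<forall>j\<in>J. \<bar>x j - y j\<bar> < e)))"

lemma good_empty: assumes "prime p" shows "Good p {} J M c"
proof -
  have "PV p J (\<lambda>_. 0)" unfolding PV_def using padic_int[of p 0] by simp
  moreover have "\<exists>x. PV p J x \<and> (\<forall>j\<in>J. \<bar>x j - y j\<bar> < e)" if "e > 0" for y e
  proof -
    have "\<forall>j. \<exists>q. padic_rat p q \<and> \<bar>q - y j\<bar> < e" using padic_dense[OF assms that] by blast
    then obtain x where "\<forall>j. padic_rat p (x j) \<and> \<bar>x j - y j\<bar> < e" by metis
    then show ?thesis unfolding PV_def by blast
  qed
  ultimately show ?thesis unfolding Good_def Sol_def by auto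
qed

lemma colop_sum:
  fixes M :: "'i \<Rightarrow> 'j \<Rightarrow> int" and s :: int and x :: "'j \<Rightarrow> real"
  assumes "finite J" "j1 \<in> J" "j2 \<in> J" "j1 \<noteq> j2"
  shows "(\<Sum>j\<in>J. of_int (if j = j2 then M i j2 - s * M i j1 else M i j) * x j) =
         (\<Sum>j\<in>J. of_int (M i j) * (x j - (if j = j1 then of_int s * x j2 else 0)))"
proof -
  have "(\<Sum>j\<in>J. of_int (if j = j2 then M i j2 - s * M i j1 else M i j) * x j) =
        (\<Sum>j\<in>J. of_int (M i j) * x j - (if j = j2 then of_int s * of_int (M i j1) * x j2 else 0))"
    by (rule sum.cong) (auto simp: algebra_simps)
  also have "\<dots> = (\<Sum>j\<in>J. of_int (M i j) * x j) - of_int s * of_int (M i j1) * x j2"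
    using assms by (simp add: sum_subtractf)
  also have "\<dots> = (\<Sum>j\<in>J. of_int (M i j) * x j - (if j = j1 then of_int s * of_int (M i j1) * x j2 else 0))"
    using assms by (simp add: sum_subtractf mult_ac)
  also have "\<dots> = (\<Sum>j\<in>J. of_int (M i j) * (x j - (if j = j1 then of_int s * x j2 else 0)))"
    by (rule sum.cong) (auto simp: algebra_simps)
  finally show ?thesis .
qed

lemma colop:
  fixes M :: "'i \<Rightarrow> 'j \<Rightarrow> int" and s :: int
  assumes "finite J" "j1 \<in> J" "j2 \<in> J" "j1 \<noteq> j2" "\<bar>s\<bar> = 1" "p > 0"
  defines "M' \<equiv> (\<lambda>i j. if j = j2 then M i j2 - s * M i j1 else M i j)"
  shows "Cnd p I J M c \<Longrightarrow> Cnd p I J M' c" and "Good p I J M' c \<Longrightarrow> Good p I J M c"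
proof -
  assume C: "Cnd p I J M c"
  show "Cnd p I J M' c" unfolding Cnd_def
  proof (intro allI impI)
    fix z :: "'i \<Rightarrow> real"
    assume h: "\<forall>j\<in>J. (\<Sum>i\<in>I. z i * of_int (M' i j)) \<in> \<int>"
    have "(\<Sum>i\<in>I. z i * of_int (M i j)) \<in> \<int>" if j: "j \<in> J" for j
    proof (cases "j = j2")
      case True
      have "(\<Sum>i\<in>I. z i * of_int (M i j)) = (\<Sum>i\<in>I. z i * of_int (M' i j2)) + of_int s * (\<Sum>i\<in>I. z i * of_int (M' i j1))"
        using True assms(4) by (simp add: M'_def sum_distrib_left algebra_simps sum.distrib[symmetric])
      then show ?thesis using h assms(2,3) by (simp add: Ints_add Ints_mult)
    next
      case False
      then show ?thesis using bspec[OF h j] by (simp add: M'_def)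
    qed
    then show "padic_rat p (\<Sum>i\<in>I. z i * c i)" using C unfolding Cnd_def by blast
  qed
next
  assume G: "Good p I J M' c"
  define T where "T = (\<lambda>x::'j\<Rightarrow>real. (\<lambda>j. x j - (if j = j1 then of_int s * x j2 else 0)))"
  define Ti where "Ti = (\<lambda>x::'j\<Rightarrow>real. (\<lambda>j. x j + (if j = j1 then of_int s * x j2 else 0)))"
  have solT: "Sol I J M c (T x) \<longleftrightarrow> Sol I J M' c x" for x
    unfolding Sol_def M'_def T_def colop_sum[OF assms(1-4)] by (rule refl)
  have TTi: "T (Ti y) = y" for y using assms(4) unfolding T_def Ti_def by auto
  have PVT: "PV p J x \<Longrightarrow> PV p J (T x)" for x
    unfolding PV_def T_def using assms(2,3,6) padic_diff padic_mult padic_int by auto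
  show "Good p I J M c" unfolding Good_def
  proof (intro conjI allI impI)
    obtain x where "PV p J x" "Sol I J M' c x" using G unfolding Good_def by blast
    then show "\<exists>x. PV p J x \<and> Sol I J M c x" using PVT solT by blast
  next
    fix y and e :: real
    assume y: "Sol I J M c y" and e: "e > 0"
    have "Sol I J M' c (Ti y)" using solT[of "Ti y"] TTi y by simp
    then obtain x where x: "PV p J x" "Sol I J M' c x" "\<forall>j\<in>J. \<bar>x j - Ti y j\<bar> < e / 2"
      using G e unfolding Good_def by (meson half_gt_zero)
    have "\<bar>T x j - y j\<bar> < e" if j: "j \<in> J" for j
    proof (cases "j = j1")
      case True
      have "T x j - y j = (x j1 - Ti y j1) - of_int s * (x j2 - Ti y j2)"
        using True assms(4) by (simp add: T_def Ti_def algebra_simps)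
      also have "\<bar>\<dots>\<bar> \<le> \<bar>x j1 - Ti y j1\<bar> + \<bar>x j2 - Ti y j2\<bar>"
      proof -
        have s1: "\<bar>real_of_int s\<bar> = 1" using assms(5) by (metis of_int_abs of_int_1)
        have "\<bar>(x j1 - Ti y j1) - of_int s * (x j2 - Ti y j2)\<bar> \<le> \<bar>x j1 - Ti y j1\<bar> + \<bar>of_int s * (x j2 - Ti y j2)\<bar>"
          by (rule abs_triangle_ineq4)
        then show ?thesis using s1 by (simp add: abs_mult)
      qed
      also have "\<dots> < e" using bspec[OF x(3) assms(2)] bspec[OF x(3) assms(3)] by linarith
      finally show ?thesis .
    next
      case False
      then show ?thesis using bspec[OF x(3) j] e by (simp add: T_def Ti_def)
    qed
    then show "\<exists>x. PV p J x \<and> Sol I J M c x \<and> (\<forall>j\<in>J. \<bar>x j - y j\<bar> < e)"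
      using PVT solT x by blast
  qed
qed


lemma zero_row:
  fixes M :: "'i \<Rightarrow> 'j \<Rightarrow> int"
  assumes "i \<notin> I" "finite I" "prime p" "\<forall>j\<in>J. M i j = 0"
    and C: "Cnd p (insert i I) J M c"
    and IH: "Cnd p I J M c \<Longrightarrow> Good p I J M c"
  shows "Good p (insert i I) J M c"
proof -
  have ci: "c i = 0"
  proof (rule ccontr)
    assume ne: "c i \<noteq> 0"
    define t where "t = 1 / ((of_nat p + 1) * c i)"
    define z where "z = (\<lambda>_::'i. 0::real)(i := t)"
    have zI: "(\<Sum>i'\<in>I. z i' * f i') = 0" for f :: "'i \<Rightarrow> real"
      using assms(1) by (intro sum.neutral) (auto simp: z_def)
    have "(\<Sum>i'\<in>insert i I. z i' * of_int (M i' j)) \<in> \<int>" if "j \<in> J" for j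
    proof -
      have "(\<Sum>i'\<in>insert i I. z i' * of_int (M i' j)) = z i * of_int (M i j) + (\<Sum>i'\<in>I. z i' * of_int (M i' j))"
        using assms(1,2) by simp
      also have "\<dots> = 0" using that assms(4) zI by (simp add: z_def)
      finally show ?thesis by simp
    qed
    then have "padic_rat p (\<Sum>i'\<in>insert i I. z i' * c i')" using C unfolding Cnd_def by blast
    moreover have "(\<Sum>i'\<in>insert i I. z i' * c i') = 1 / (of_nat p + 1)"
    proof -
      have "(\<Sum>i'\<in>insert i I. z i' * c i') = z i * c i + (\<Sum>i'\<in>I. z i' * c i')"
        using assms(1,2) by simp
      also have "\<dots> = t * c i" using zI by (simp add: z_def)
      also have "\<dots> = 1 / (of_nat p + 1)"
      proof -
        have pp: "(of_nat p + 1::real) \<noteq> 0" by (metis of_nat_Suc of_nat_eq_0_iff add.commute nat.distinct(1))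
        show ?thesis using ne pp by (simp add: t_def)
      qed
      finally show ?thesis .
    qed
    ultimately show False using padic_not[OF assms(3)] by simp
  qed
  have "Cnd p I J M c" unfolding Cnd_def
  proof (intro allI impI)
    fix z :: "'i \<Rightarrow> real"
    assume h: "\<forall>j\<in>J. (\<Sum>i\<in>I. z i * of_int (M i j)) \<in> \<int>"
    define Z where "Z = z(i := 0)"
    have sI: "(\<Sum>i'\<in>I. Z i' * f i') = (\<Sum>i'\<in>I. z i' * f i')" for f :: "'i \<Rightarrow> real"
      using assms(1) by (intro sum.cong) (auto simp: Z_def)
    have "(\<Sum>i'\<in>insert i I. Z i' * of_int (M i' j)) \<in> \<int>" if "j \<in> J" for j
      using assms(1,2) h that sI by (simp add: Z_def)
    then have "padic_rat p (\<Sum>i'\<in>insert i I. Z i' * c i')" using C unfolding Cnd_def by blast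
    then show "padic_rat p (\<Sum>i\<in>I. z i * c i)" using assms(1,2) sI by (simp add: Z_def)
  qed
  then have G: "Good p I J M c" by (rule IH)
  have "Sol (insert i I) J M c x \<longleftrightarrow> Sol I J M c x" for x
    unfolding Sol_def using assms(4) ci by simp
  then show ?thesis using G unfolding Good_def by simp
qed

lemma elim_row:
  fixes M :: "'i \<Rightarrow> 'j \<Rightarrow> int"
  assumes "i \<notin> I" "finite I" "finite J" "prime p" "j0 \<in> J" "M i j0 \<noteq> 0"
    and z0: "\<forall>j\<in>J. j \<noteq> j0 \<longrightarrow> M i j = 0"
    and C: "Cnd p (insert i I) J M c"
    and IH: "\<And>c'. Cnd p I (J - {j0}) M c' \<Longrightarrow> Good p I (J - {j0}) M c'"
  shows "Good p (insert i I) J M c"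
proof -
  have p0: "p > 0" using assms(4) prime_gt_0_nat by blast
  define g where "g = real_of_int (M i j0)"
  have g0: "g \<noteq> 0" using assms(6) by (simp add: g_def)
  define x0 where "x0 = c i / g"
  define c' where "c' = (\<lambda>i'. c i' - of_int (M i' j0) * x0)"
  have rowsum: "(\<Sum>j\<in>J. of_int (M i j) * x j) = g * x j0" for x :: "'j \<Rightarrow> real"
  proof -
    have "(\<Sum>j\<in>J. of_int (M i j) * x j) = of_int (M i j0) * x j0 + (\<Sum>j\<in>J - {j0}. of_int (M i j) * x j)"
      using assms(3,5) by (rule sum.remove)
    also have "(\<Sum>j\<in>J - {j0}. of_int (M i j) * x j) = 0" using z0 by (intro sum.neutral) auto
    finally show ?thesis by (simp add: g_def)
  qed
  have splitJ: "(\<Sum>j\<in>J. of_int (M i' j) * x j) = of_int (M i' j0) * x j0 + (\<Sum>j\<in>J - {j0}. of_int (M i' j) * x j)"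
    for i' and x :: "'j \<Rightarrow> real"
    using assms(3,5) by (rule sum.remove)
  have px0: "padic_rat p x0"
  proof -
    define z where "z = (\<lambda>_::'i. 0::real)(i := 1 / g)"
    have zI: "(\<Sum>i'\<in>I. z i' * f i') = 0" for f :: "'i \<Rightarrow> real"
      using assms(1) by (intro sum.neutral) (auto simp: z_def)
    have "(\<Sum>i'\<in>insert i I. z i' * of_int (M i' j)) \<in> \<int>" if "j \<in> J" for j
    proof -
      have "(\<Sum>i'\<in>insert i I. z i' * of_int (M i' j)) = z i * of_int (M i j) + (\<Sum>i'\<in>I. z i' * of_int (M i' j))"
        using assms(1,2) by simp
      also have "\<dots> = of_int (M i j) / g" using zI by (simp add: z_def)
      also have "\<dots> = (if j = j0 then 1 else 0)" using z0 that g0 by (auto simp: g_def)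
      finally show ?thesis by simp
    qed
    then have "padic_rat p (\<Sum>i'\<in>insert i I. z i' * c i')" using C unfolding Cnd_def by blast
    moreover have "(\<Sum>i'\<in>insert i I. z i' * c i') = x0"
    proof -
      have "(\<Sum>i'\<in>insert i I. z i' * c i') = z i * c i + (\<Sum>i'\<in>I. z i' * c i')"
        using assms(1,2) by simp
      also have "\<dots> = x0" using zI by (simp add: z_def x0_def)
      finally show ?thesis .
    qed
    ultimately show ?thesis by simp
  qed
  have "Cnd p I (J - {j0}) M c'" unfolding Cnd_def
  proof (intro allI impI)
    fix z :: "'i \<Rightarrow> real"
    assume h: "\<forall>j\<in>J - {j0}. (\<Sum>i\<in>I. z i * of_int (M i j)) \<in> \<int>"
    define Z where "Z = z(i := - (\<Sum>i'\<in>I. z i' * of_int (M i' j0)) / g)"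
    have sI: "(\<Sum>i'\<in>I. Z i' * f i') = (\<Sum>i'\<in>I. z i' * f i')" for f :: "'i \<Rightarrow> real"
      using assms(1) by (intro sum.cong) (auto simp: Z_def)
    have sIns: "(\<Sum>i'\<in>insert i I. Z i' * f i') = Z i * f i + (\<Sum>i'\<in>I. z i' * f i')" for f :: "'i \<Rightarrow> real"
      using assms(1,2) sI by simp
    have "(\<Sum>i'\<in>insert i I. Z i' * of_int (M i' j)) \<in> \<int>" if j: "j \<in> J" for j
    proof (cases "j = j0")
      case True
      then show ?thesis using sIns g0 by (simp add: Z_def g_def)
    next
      case False
      then show ?thesis using sIns z0 j bspec[OF h, of j] by (simp add: Z_def)
    qed
    then have "padic_rat p (\<Sum>i'\<in>insert i I. Z i' * c i')" using C unfolding Cnd_def by blast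
    moreover have "(\<Sum>i'\<in>insert i I. Z i' * c i') = (\<Sum>i\<in>I. z i * c' i)"
    proof -
      have "(\<Sum>i\<in>I. z i * c' i) = (\<Sum>i\<in>I. z i * c i) - x0 * (\<Sum>i'\<in>I. z i' * of_int (M i' j0))"
        by (simp add: c'_def algebra_simps sum_subtractf sum_distrib_left)
      also have "\<dots> = Z i * c i + (\<Sum>i\<in>I. z i * c i)"
        using g0 by (simp add: Z_def x0_def field_simps)
      finally show ?thesis using sIns by simp
    qed
    ultimately show "padic_rat p (\<Sum>i\<in>I. z i * c' i)" by simp
  qed
  then have G: "Good p I (J - {j0}) M c'" by (rule IH)
  define ext where "ext = (\<lambda>x::'j \<Rightarrow> real. x(j0 := x0))"
  have solext: "Sol (insert i I) J M c (ext x)" if "Sol I (J - {j0}) M c' x" for x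
    unfolding Sol_def
  proof
    fix i' assume i': "i' \<in> insert i I"
    show "(\<Sum>j\<in>J. of_int (M i' j) * ext x j) = c i'"
    proof (cases "i' = i")
      case True
      then show ?thesis using rowsum g0 by (simp add: ext_def x0_def)
    next
      case False
      then have "i' \<in> I" using i' by simp
      have "(\<Sum>j\<in>J - {j0}. of_int (M i' j) * ext x j) = (\<Sum>j\<in>J - {j0}. of_int (M i' j) * x j)"
        by (intro sum.cong) (auto simp: ext_def)
      then show ?thesis using splitJ[of i' "ext x"] that \<open>i' \<in> I\<close>
        unfolding Sol_def by (simp add: ext_def c'_def)
    qed
  qed
  have pvext: "PV p J (ext x)" if "PV p (J - {j0}) x" for x
    using that px0 unfolding PV_def ext_def by auto
  show ?thesis unfolding Good_def
  proof (intro conjI allI impI)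
    obtain x where "PV p (J - {j0}) x" "Sol I (J - {j0}) M c' x" using G unfolding Good_def by blast
    then show "\<exists>x. PV p J x \<and> Sol (insert i I) J M c x" using solext pvext by blast
  next
    fix y and e :: real
    assume y: "Sol (insert i I) J M c y" and e: "e > 0"
    have yj0: "y j0 = x0" using y rowsum[of y] g0 unfolding Sol_def x0_def by (auto simp: field_simps)
    have "Sol I (J - {j0}) M c' y" unfolding Sol_def
    proof
      fix i' assume i': "i' \<in> I"
      then show "(\<Sum>j\<in>J - {j0}. of_int (M i' j) * y j) = c' i'"
        using y splitJ[of i' y] yj0 unfolding Sol_def by (simp add: c'_def)
    qed
    then obtain x where x: "PV p (J - {j0}) x" "Sol I (J - {j0}) M c' x" "\<forall>j\<in>J - {j0}. \<bar>x j - y j\<bar> < e"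
      using G e unfolding Good_def by blast
    have "\<forall>j\<in>J. \<bar>ext x j - y j\<bar> < e" using x(3) e yj0 by (auto simp: ext_def)
    then show "\<exists>x. PV p J x \<and> Sol (insert i I) J M c x \<and> (\<forall>j\<in>J. \<bar>x j - y j\<bar> < e)"
      using solext[OF x(2)] pvext[OF x(1)] by blast
  qed
qed


lemma step:
  fixes M :: "'i \<Rightarrow> 'j \<Rightarrow> int"
  assumes IH: "\<And>J' (M'::'i\<Rightarrow>'j\<Rightarrow>int) c'. finite J' \<Longrightarrow> Cnd p I J' M' c' \<Longrightarrow> Good p I J' M' c'"
    and "i \<notin> I" "finite I" "prime p" "finite J" "Cnd p (insert i I) J M c"
  shows "Good p (insert i I) J M c"
  using assms(6)
proof (induction "\<Sum>j\<in>J. nat \<bar>M i j\<bar>" arbitrary: M rule: less_induct)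
  case less
  have p0: "p > 0" using assms(4) prime_gt_0_nat by blast
  show ?case
  proof (cases "\<forall>j\<in>J. M i j = 0")
    case True
    show ?thesis by (rule zero_row[OF assms(2,3,4) True less.prems]) (rule IH[OF assms(5)])
  next
    case False
    then obtain j0 where j0: "j0 \<in> J" "M i j0 \<noteq> 0" by blast
    show ?thesis
    proof (cases "\<forall>j\<in>J. j \<noteq> j0 \<longrightarrow> M i j = 0")
      case True
      show ?thesis
        by (rule elim_row[OF assms(2,3,5,4) j0 True less.prems]) (rule IH; use assms(5) in auto)
    next
      case False
      then obtain j1 where j1: "j1 \<in> J" "j1 \<noteq> j0" "M i j1 \<noteq> 0" by blast
      have "\<exists>a b. a \<in> J \<and> b \<in> J \<and> a \<noteq> b \<and> M i a \<noteq> 0 \<and> M i b \<noteq> 0 \<and> \<bar>M i a\<bar> \<le> \<bar>M i b\<bar>"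
      proof (cases "\<bar>M i j0\<bar> \<le> \<bar>M i j1\<bar>")
        case True then show ?thesis using j0 j1 by blast
      next
        case False then show ?thesis using j0 j1 by (intro exI[of _ j1] exI[of _ j0]) auto
      qed
      then obtain a b where ab: "a \<in> J" "b \<in> J" "a \<noteq> b" "M i a \<noteq> 0" "M i b \<noteq> 0" "\<bar>M i a\<bar> \<le> \<bar>M i b\<bar>"
        by blast
      define s where "s = sgn (M i a * M i b)"
      define M' where "M' = (\<lambda>i' j. if j = b then M i' b - s * M i' a else M i' j)"
      have s1: "\<bar>s\<bar> = 1" using ab(4,5) by (simp add: s_def sgn_if abs_if)
      have dec: "\<bar>M' i b\<bar> < \<bar>M i b\<bar>"
        using ab(4,5,6) unfolding M'_def s_def by (auto simp: sgn_if abs_if zero_less_mult_iff mult_less_0_iff split: if_splits)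
      have lt: "(\<Sum>j\<in>J. nat \<bar>M' i j\<bar>) < (\<Sum>j\<in>J. nat \<bar>M i j\<bar>)"
        by (rule sum_strict_mono_ex1[OF assms(5)]) (use dec ab(2) in \<open>auto simp: M'_def\<close>)
      have C': "Cnd p (insert i I) J M' c"
        using colop(1)[OF assms(5) ab(1,2,3) s1 p0] less.prems unfolding M'_def by blast
      have "Good p (insert i I) J M' c" by (rule less.hyps[OF lt C'])
      then show ?thesis using colop(2)[OF assms(5) ab(1,2,3) s1 p0] unfolding M'_def by blast
    qed
  qed
qed

lemma main_lattice:
  fixes M :: "'i \<Rightarrow> 'j \<Rightarrow> int"
  assumes "finite I" "prime p"
  shows "finite J \<Longrightarrow> Cnd p I J M c \<Longrightarrow> Good p I J M c"
  using assms(1)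
proof (induction I arbitrary: J M c rule: finite_induct)
  case empty
  then show ?case using good_empty[OF assms(2)] by blast
next
  case (insert i I)
  show ?case by (rule step[OF _ insert.hyps(2,1) assms(2) insert.prems]) (rule insert.IH)
qed



definition rowv :: "int ^ 'n ^ 'm \<Rightarrow> 'm \<Rightarrow> real ^ 'n" where
  "rowv A i = (\<chi> j. of_int (A $ i $ j))"

lemma rowv_inner: "rowv A i \<bullet> x = (\<Sum>j\<in>UNIV. of_int (A $ i $ j) * x $ j)"
  by (simp add: rowv_def inner_vec_def)

lemma polyh_alt: "polyh A b = (\<Inter>i. {x. rowv A i \<bullet> x \<le> of_int (b $ i)})"
  unfolding polyh_def rowv_inner by auto

lemma convex_polyh: "convex (polyh A b)"
  unfolding polyh_alt by (intro convex_INT allI convex_halfspace_le)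

lemma rational_polyh:
  fixes A :: "int ^ 'n ^ 'm" and b :: "int ^ 'm"
  shows "rational_polyhedron (polyh A b)"
proof -
  obtain xs :: "'m list" where xs: "set xs = UNIV" using finite_list[of "UNIV::'m set"] by auto
  define cs where "cs = map (\<lambda>i. (rowv A i, real_of_int (b $ i))) xs"
  have "\<forall>(a, \<beta>) \<in> set cs. (\<forall>i. a $ i \<in> \<rat>) \<and> \<beta> \<in> \<rat>"
    unfolding cs_def by (auto simp: rowv_def)
  moreover have "polyh A b = {x. \<forall>(a, \<beta>) \<in> set cs. a \<bullet> x \<le> \<beta>}"
    unfolding polyh_alt cs_def using xs by auto
  ultimately show ?thesis unfolding rational_polyhedron_def by blast
qed

lemma face_padic:
  fixes A :: "int ^ 'n ^ 'm" and b :: "int ^ 'm"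
  assumes p: "prime p" and F: "F face_of polyh A b" "F \<noteq> {}"
    and C: "Cnd p (tight_rows A b F) UNIV (\<lambda>i j. A $ i $ j) (\<lambda>i. of_int (b $ i))"
  shows "\<exists>x\<in>F. padic_vec p x"
proof -
  define P where "P = polyh A b"
  define T where "T = tight_rows A b F"
  have FP: "F \<subseteq> P" using F face_of_imp_subset unfolding P_def by blast
  have cF: "convex F" using F face_of_imp_convex by blast
  have inP: "x \<in> P \<longleftrightarrow> (\<forall>i. rowv A i \<bullet> x \<le> of_int (b $ i))" for x
    unfolding P_def polyh_alt by auto
  have inT: "i \<in> T \<longleftrightarrow> (\<forall>x\<in>F. rowv A i \<bullet> x = of_int (b $ i))" for i
    unfolding T_def tight_rows_def rowv_inner by simp
  obtain y where yri: "y \<in> rel_interior F" using rel_interior_eq_empty[OF cF] F(2) by blast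
  have yF: "y \<in> F" using yri rel_interior_subset by blast
  obtain e where e: "e > 0" "cball y e \<inter> affine hull F \<subseteq> F"
    using yri mem_rel_interior_cball by blast
  have strict: "rowv A i \<bullet> y < of_int (b $ i)" if iT: "i \<notin> T" for i
  proof (rule ccontr)
    assume "\<not> rowv A i \<bullet> y < of_int (b $ i)"
    moreover have "rowv A i \<bullet> y \<le> of_int (b $ i)" using yF FP inP by blast
    ultimately have yeq: "rowv A i \<bullet> y = of_int (b $ i)" by linarith
    obtain x where xF: "x \<in> F" and xne: "rowv A i \<bullet> x \<noteq> of_int (b $ i)" using iT inT by blast
    have "rowv A i \<bullet> x \<le> of_int (b $ i)" using xF FP inP by blast
    then have xlt: "rowv A i \<bullet> x < of_int (b $ i)" using xne by linarith
    have xy: "x \<noteq> y" using xne yeq by blast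
    define d where "d = e / norm (y - x)"
    have d0: "d > 0" using e xy by (simp add: d_def)
    define w where "w = (1 + d) *\<^sub>R y + (- d) *\<^sub>R x"
    have "y - w = d *\<^sub>R (x - y)" by (simp add: w_def algebra_simps)
    then have "dist y w = d * norm (x - y)" using d0 by (simp add: dist_norm)
    also have "\<dots> = e" using xy by (simp add: d_def norm_minus_commute)
    finally have "w \<in> cball y e" by simp
    moreover have "w \<in> affine hull F"
      unfolding w_def by (rule mem_affine[OF affine_affine_hull]) (use yF xF hull_inc in auto)
    ultimately have "w \<in> P" using e FP by blast
    then have "rowv A i \<bullet> w \<le> of_int (b $ i)" using inP by blast
    moreover have "rowv A i \<bullet> w = of_int (b $ i) + d * of_int (b $ i) - d * (rowv A i \<bullet> x)"
      using yeq by (simp add: w_def inner_add_right algebra_simps)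
    moreover have "d * (rowv A i \<bullet> x) < d * of_int (b $ i)" using xlt d0 by simp
    ultimately show False by linarith
  qed
  have fin: "finite (UNIV :: 'n set)" by simp
  have G: "Good p T UNIV (\<lambda>i j. A $ i $ j) (\<lambda>i. of_int (b $ i))"
    using main_lattice[OF finite[of T] p fin] C unfolding T_def by blast
  have soly: "Sol T UNIV (\<lambda>i j. A $ i $ j) (\<lambda>i. of_int (b $ i)) (\<lambda>j. y $ j)"
    unfolding Sol_def using yF inT unfolding rowv_inner by blast
  define K where "K = 1 + (\<Sum>i\<in>UNIV. \<Sum>j\<in>UNIV. \<bar>real_of_int (A $ i $ j)\<bar>)"
  have rowK: "(\<Sum>j\<in>UNIV. \<bar>real_of_int (A $ i $ j)\<bar>) < K" for i
  proof -
    have "(\<Sum>j\<in>UNIV. \<bar>real_of_int (A $ i $ j)\<bar>) \<le> (\<Sum>i\<in>UNIV. \<Sum>j\<in>UNIV. \<bar>real_of_int (A $ i $ j)\<bar>)"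
      by (rule member_le_sum) (auto intro: sum_nonneg)
    then show ?thesis unfolding K_def by simp
  qed
  have K0: "K > 0"
  proof -
    have "0 \<le> (\<Sum>j\<in>UNIV. \<bar>real_of_int (A $ undefined $ j)\<bar>)" by (rule sum_nonneg) simp
    then show ?thesis using rowK[of undefined] by linarith
  qed
  define Sl where "Sl = insert 1 ((\<lambda>i. of_int (b $ i) - rowv A i \<bullet> y) ` (- T))"
  define m where "m = Min Sl"
  have finSl: "finite Sl" unfolding Sl_def by simp
  have m0: "m > 0" unfolding m_def using finSl strict by (auto simp: Sl_def)
  have mle: "m \<le> of_int (b $ i) - rowv A i \<bullet> y" if "i \<notin> T" for i
    unfolding m_def using finSl that by (intro Min_le) (auto simp: Sl_def)
  define eps where "eps = m / K"
  have eps0: "eps > 0" using m0 K0 by (simp add: eps_def)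
  have closeP: "u \<in> P" if uc: "\<forall>j. \<bar>u $ j - y $ j\<bar> < eps"
      and uT: "\<forall>i\<in>T. rowv A i \<bullet> u = of_int (b $ i)" for u
    unfolding inP
  proof
    fix i
    show "rowv A i \<bullet> u \<le> of_int (b $ i)"
    proof (cases "i \<in> T")
      case True then show ?thesis using uT by simp
    next
      case False
      have "rowv A i \<bullet> u - rowv A i \<bullet> y = (\<Sum>j\<in>UNIV. of_int (A $ i $ j) * (u $ j - y $ j))"
        unfolding rowv_inner by (simp add: algebra_simps sum_subtractf)
      also have "\<dots> \<le> (\<Sum>j\<in>UNIV. \<bar>of_int (A $ i $ j)\<bar> * eps)"
      proof (rule sum_mono)
        fix j :: 'n
        have "of_int (A $ i $ j) * (u $ j - y $ j) \<le> \<bar>of_int (A $ i $ j)\<bar> * \<bar>u $ j - y $ j\<bar>"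
          by (metis abs_ge_self abs_mult)
        also have "\<dots> \<le> \<bar>of_int (A $ i $ j)\<bar> * eps" using uc by (intro mult_left_mono) (auto intro: less_imp_le)
        finally show "of_int (A $ i $ j) * (u $ j - y $ j) \<le> \<bar>of_int (A $ i $ j)\<bar> * eps" .
      qed
      also have "\<dots> = (\<Sum>j\<in>UNIV. \<bar>real_of_int (A $ i $ j)\<bar>) * eps" by (simp add: sum_distrib_right)
      also have "\<dots> \<le> K * eps" using rowK[of i] eps0 by (intro mult_right_mono) auto
      also have "\<dots> = m" using K0 by (simp add: eps_def)
      also have "\<dots> \<le> of_int (b $ i) - rowv A i \<bullet> y" using mle False by blast
      finally show ?thesis by simp
    qed
  qed
  obtain x where x: "PV p UNIV x" "Sol T UNIV (\<lambda>i j. A $ i $ j) (\<lambda>i. of_int (b $ i)) x"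
      "\<forall>j\<in>UNIV. \<bar>x j - y $ j\<bar> < eps"
    using G soly eps0 unfolding Good_def by blast
  define xv where "xv = (\<chi> j. x j)"
  define u2 where "u2 = 2 *\<^sub>R y - xv"
  have xvT: "\<forall>i\<in>T. rowv A i \<bullet> xv = of_int (b $ i)"
    using x(2) unfolding Sol_def rowv_inner xv_def by simp
  have yT: "\<forall>i\<in>T. rowv A i \<bullet> y = of_int (b $ i)" using yF inT by blast
  have xvP: "xv \<in> P" using x(3) xvT by (intro closeP) (auto simp: xv_def)
  have u2P: "u2 \<in> P"
  proof (rule closeP)
    show "\<forall>j. \<bar>u2 $ j - y $ j\<bar> < eps" using x(3) by (auto simp: u2_def xv_def abs_minus_commute)
    show "\<forall>i\<in>T. rowv A i \<bullet> u2 = of_int (b $ i)"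
      using xvT yT by (simp add: u2_def inner_diff_right)
  qed
  have "xv \<in> F"
  proof (cases "xv = y")
    case True then show ?thesis using yF by simp
  next
    case False
    have "y = midpoint xv u2" by (simp add: midpoint_def u2_def algebra_simps)
    moreover have "xv \<noteq> u2"
    proof
      assume h: "xv = u2"
      have "xv + xv = 2 *\<^sub>R y" using h unfolding u2_def by (metis diff_add_cancel)
      then have "(2::real) *\<^sub>R xv = 2 *\<^sub>R y" by (simp add: scaleR_2)
      then show False using False by simp
    qed
    ultimately have "y \<in> open_segment xv u2" by simp
    then show ?thesis using face_ofD[OF F(1)] xvP u2P yF unfolding P_def by blast
  qed
  moreover have "padic_vec p xv" using x(1) unfolding padic_vec_def PV_def xv_def by simp
  ultimately show ?thesis by blast
qed



lemma inner_sum_swap: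
  fixes A :: "int ^ 'n ^ 'm" and u :: "'m \<Rightarrow> real"
  shows "(\<Sum>j\<in>UNIV. (\<Sum>i\<in>T. u i * of_int (A $ i $ j)) * x $ j) = (\<Sum>i\<in>T. u i * (\<Sum>j\<in>UNIV. of_int (A $ i $ j) * x $ j))"
proof -
  have "(\<Sum>j\<in>UNIV. (\<Sum>i\<in>T. u i * of_int (A $ i $ j)) * x $ j) = (\<Sum>j\<in>UNIV. \<Sum>i\<in>T. u i * (of_int (A $ i $ j) * x $ j))"
    by (simp add: sum_distrib_right mult.assoc)
  also have "\<dots> = (\<Sum>i\<in>T. \<Sum>j\<in>UNIV. u i * (of_int (A $ i $ j) * x $ j))"
    by (rule sum.swap)
  also have "\<dots> = (\<Sum>i\<in>T. u i * (\<Sum>j\<in>UNIV. of_int (A $ i $ j) * x $ j))"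
    by (simp add: sum_distrib_left)
  finally show ?thesis .
qed

lemma affine_eqs:
  fixes A :: "int ^ 'n ^ 'm"
  shows "affine {x::real^'n. \<forall>i\<in>T. (\<Sum>j\<in>UNIV. of_int (A $ i $ j) * x $ j) = real_of_int (b $ i)}"
  unfolding affine_def
proof (intro ballI allI impI CollectI)
  fix x y :: "real ^ 'n" and u v :: real and i
  assume x: "x \<in> {x::real^'n. \<forall>i\<in>T. (\<Sum>j\<in>UNIV. of_int (A $ i $ j) * x $ j) = real_of_int (b $ i)}"
    and y: "y \<in> {x::real^'n. \<forall>i\<in>T. (\<Sum>j\<in>UNIV. of_int (A $ i $ j) * x $ j) = real_of_int (b $ i)}"
    and uv: "u + v = 1" and i: "i \<in> T"
  have "(\<Sum>j\<in>UNIV. of_int (A $ i $ j) * (u *\<^sub>R x + v *\<^sub>R y) $ j)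
      = u * (\<Sum>j\<in>UNIV. of_int (A $ i $ j) * x $ j) + v * (\<Sum>j\<in>UNIV. of_int (A $ i $ j) * y $ j)"
    by (simp add: algebra_simps sum.distrib sum_distrib_left)
  also have "\<dots> = (u + v) * real_of_int (b $ i)" using x y i by (simp add: algebra_simps)
  finally show "(\<Sum>j\<in>UNIV. of_int (A $ i $ j) * (u *\<^sub>R x + v *\<^sub>R y) $ j) = real_of_int (b $ i)"
    using uv by simp
qed

theorem theorem5p2:
  fixes A :: "int ^ 'n ^ 'm" and b :: "int ^ 'm" and p :: nat
  assumes "prime p"
    and "polyh A b \<noteq> {}"
  defines "P \<equiv> polyh A b"
  defines "S1 \<equiv> padic_polyhedron p P"
    and "S2 \<equiv> (\<forall>F. F face_of P \<and> F \<noteq> {} \<longrightarrow> (\<exists>x \<in> affine hull F. padic_vec p x))"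
    and "S3 \<equiv> (\<forall>F. F face_of P \<and> F \<noteq> {} \<longrightarrow>
               (\<forall>z :: real ^ 'm.
                  (\<forall>j. (\<Sum>i\<in>tight_rows A b F. z $ i * of_int (A $ i $ j)) \<in> \<int>) \<longrightarrow>
                  padic_rat p (\<Sum>i\<in>tight_rows A b F. z $ i * of_int (b $ i))))"
    and "S4 \<equiv> (\<forall>w :: real ^ 'n. (\<exists>x. is_max_sol P w x) \<longrightarrow>
               (\<exists>x. is_max_sol P w x \<and> padic_vec p x))"
    and "S5 \<equiv> (\<forall>w :: int ^ 'n. (\<exists>x. is_max_sol P (\<chi> j. of_int (w $ j)) x) \<longrightarrow>
               padic_rat p (Sup ((\<lambda>x. (\<chi> j. of_int (w $ j)) \<bullet> x) ` P)))"
  shows "(S1 \<longleftrightarrow> S2) \<and> (S1 \<longleftrightarrow> S3) \<and> (S1 \<longleftrightarrow> S4) \<and> (S1 \<longleftrightarrow> S5)"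
proof -
  have p0: "p > 0" using assms(1) prime_gt_0_nat by blast
  have Pne: "P \<noteq> {}" using assms(2) unfolding P_def by simp
  have cP: "convex P" unfolding P_def by (rule convex_polyh)
  have inP: "x \<in> P \<longleftrightarrow> (\<forall>i. (\<Sum>j\<in>UNIV. of_int (A $ i $ j) * x $ j) \<le> real_of_int (b $ i))" for x
    unfolding P_def polyh_def by simp
  have padic_lin: "padic_rat p (\<Sum>j\<in>UNIV. c j * x $ j)"
    if "\<forall>j. c j \<in> \<int>" "padic_vec p x" for c :: "'n \<Rightarrow> real" and x
    using that by (intro padic_sum[OF p0] padic_mult[OF p0]) (auto simp: padic_Ints padic_vec_def)
  have i12: "S1 \<Longrightarrow> S2" unfolding S2_def
  proof (intro allI impI)
    fix F assume "S1" and F: "F face_of P \<and> F \<noteq> {}"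
    have "\<forall>F. F face_of P \<and> F \<noteq> {} \<longrightarrow> (\<exists>x\<in>F. padic_vec p x)"
      using \<open>S1\<close> unfolding S1_def padic_polyhedron_def by (elim conjE)
    then obtain x where x: "x \<in> F" "padic_vec p x" using F by auto
    have "x \<in> affine hull F" by (rule hull_inc[OF x(1)])
    then show "\<exists>x\<in>affine hull F. padic_vec p x" using x(2) by (rule bexI[rotated])
  qed
  have i23: "S2 \<Longrightarrow> S3" unfolding S3_def
  proof (intro allI impI)
    fix F and z :: "real ^ 'm"
    assume S2 and F: "F face_of P \<and> F \<noteq> {}"
      and H: "\<forall>j. (\<Sum>i\<in>tight_rows A b F. z $ i * of_int (A $ i $ j)) \<in> \<int>"
    define T where "T = tight_rows A b F"
    obtain x where xa: "x \<in> affine hull F" and xp: "padic_vec p x" using \<open>S2\<close> F unfolding S2_def by blast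
    define E where "E = {x. \<forall>i\<in>T. (\<Sum>j\<in>UNIV. of_int (A $ i $ j) * x $ j) = real_of_int (b $ i)}"
    have "F \<subseteq> E" unfolding E_def T_def tight_rows_def by auto
    moreover have "affine E" unfolding E_def by (rule affine_eqs)
    ultimately have "affine hull F \<subseteq> E" by (rule hull_minimal)
    then have xE: "\<forall>i\<in>T. (\<Sum>j\<in>UNIV. of_int (A $ i $ j) * x $ j) = real_of_int (b $ i)"
      using xa unfolding E_def by blast
    have "(\<Sum>i\<in>T. z $ i * of_int (b $ i)) = (\<Sum>i\<in>T. z $ i * (\<Sum>j\<in>UNIV. of_int (A $ i $ j) * x $ j))"
      using xE by simp
    also have "\<dots> = (\<Sum>j\<in>UNIV. (\<Sum>i\<in>T. z $ i * of_int (A $ i $ j)) * x $ j)"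
      by (rule inner_sum_swap[symmetric])
    finally have eq: "(\<Sum>i\<in>T. z $ i * of_int (b $ i)) = (\<Sum>j\<in>UNIV. (\<Sum>i\<in>T. z $ i * of_int (A $ i $ j)) * x $ j)" .
    show "padic_rat p (\<Sum>i\<in>tight_rows A b F. z $ i * of_int (b $ i))"
      unfolding T_def[symmetric] eq using H xp unfolding T_def by (intro padic_lin) auto
  qed
  have i31: "S3 \<Longrightarrow> S1" unfolding S1_def padic_polyhedron_def
  proof (intro conjI allI impI)
    assume S3
    show "rational_polyhedron P" unfolding P_def by (rule rational_polyh)
    show "P \<noteq> {}" by (rule Pne)
    fix F assume F: "F face_of P \<and> F \<noteq> {}"
    have "Cnd p (tight_rows A b F) UNIV (\<lambda>i j. A $ i $ j) (\<lambda>i. of_int (b $ i))"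
      unfolding Cnd_def
    proof (intro allI impI)
      fix z :: "'m \<Rightarrow> real"
      assume "\<forall>j\<in>UNIV. (\<Sum>i\<in>tight_rows A b F. z i * of_int (A $ i $ j)) \<in> \<int>"
      then show "padic_rat p (\<Sum>i\<in>tight_rows A b F. z i * of_int (b $ i))"
        using \<open>S3\<close> F unfolding S3_def by (auto dest!: spec[of _ "\<chi> i. z i"])
    qed
    then show "\<exists>x\<in>F. padic_vec p x" using face_padic[OF assms(1)] F unfolding P_def by blast
  qed
  have i14: "S1 \<Longrightarrow> S4" unfolding S4_def
  proof (intro allI impI)
    fix w :: "real ^ 'n"
    assume S1 and "\<exists>x. is_max_sol P w x"
    then obtain x where x: "is_max_sol P w x" by blast
    define F where "F = P \<inter> {y. w \<bullet> y = w \<bullet> x}"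
    have "F face_of P" unfolding F_def
      by (rule face_of_Int_supporting_hyperplane_le[OF cP]) (use x in \<open>auto simp: is_max_sol_def\<close>)
    moreover have "F \<noteq> {}" using x unfolding F_def is_max_sol_def by blast
    ultimately obtain x' where "x' \<in> F" "padic_vec p x'"
      using \<open>S1\<close> unfolding S1_def padic_polyhedron_def by blast
    then show "\<exists>x. is_max_sol P w x \<and> padic_vec p x"
      using x unfolding F_def is_max_sol_def by auto
  qed
  have i45: "S4 \<Longrightarrow> S5" unfolding S5_def
  proof (intro allI impI)
    fix w :: "int ^ 'n"
    assume S4 and "\<exists>x. is_max_sol P (\<chi> j. of_int (w $ j)) x"
    then obtain x where x: "is_max_sol P (\<chi> j. of_int (w $ j)) x" "padic_vec p x"
      unfolding S4_def by blast
    have "Sup ((\<lambda>x. (\<chi> j. of_int (w $ j)) \<bullet> x) ` P) = (\<chi> j. real_of_int (w $ j)) \<bullet> x"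
      using x(1) unfolding is_max_sol_def by (intro cSup_eq_maximum) auto
    also have "\<dots> = (\<Sum>j\<in>UNIV. of_int (w $ j) * x $ j)" by (simp add: inner_vec_def)
    finally show "padic_rat p (Sup ((\<lambda>x. (\<chi> j. of_int (w $ j)) \<bullet> x) ` P))"
      using padic_lin[of "\<lambda>j. of_int (w $ j)" x] x(2) by simp
  qed
  have i53: "S5 \<Longrightarrow> S3" unfolding S3_def
  proof (intro allI impI)
    fix F and z :: "real ^ 'm"
    assume S5 and F: "F face_of P \<and> F \<noteq> {}"
      and H: "\<forall>j. (\<Sum>i\<in>tight_rows A b F. z $ i * of_int (A $ i $ j)) \<in> \<int>"
    define T where "T = tight_rows A b F"
    define k where "k = \<lceil>\<Sum>i\<in>UNIV. \<bar>z $ i\<bar>\<rceil>"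
    define u where "u = (\<lambda>i. z $ i + of_int k)"
    have u0: "u i \<ge> 0" for i
    proof -
      have "\<bar>z $ i\<bar> \<le> (\<Sum>i\<in>UNIV. \<bar>z $ i\<bar>)" by (rule member_le_sum) auto
      also have "\<dots> \<le> of_int k" unfolding k_def by (rule le_of_int_ceiling)
      finally show ?thesis unfolding u_def by linarith
    qed
    have uA: "(\<Sum>i\<in>T. u i * of_int (A $ i $ j)) \<in> \<int>" for j
    proof -
      have "(\<Sum>i\<in>T. u i * of_int (A $ i $ j)) = (\<Sum>i\<in>T. z $ i * of_int (A $ i $ j)) + of_int k * (\<Sum>i\<in>T. of_int (A $ i $ j))"
        by (simp add: u_def algebra_simps sum.distrib sum_distrib_left)
      then show ?thesis using H unfolding T_def by (simp add: Ints_add Ints_mult Ints_sum)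
    qed
    define w :: "int ^ 'n" where "w = (\<chi> j. \<lfloor>\<Sum>i\<in>T. u i * of_int (A $ i $ j)\<rfloor>)"
    have wj: "real_of_int (w $ j) = (\<Sum>i\<in>T. u i * of_int (A $ i $ j))" for j
      using uA[of j] unfolding w_def by (auto elim!: Ints_cases)
    have winner: "(\<chi> j. real_of_int (w $ j)) \<bullet> y = (\<Sum>i\<in>T. u i * (\<Sum>j\<in>UNIV. of_int (A $ i $ j) * y $ j))" for y
      by (simp add: inner_vec_def wj inner_sum_swap)
    obtain x0 where x0: "x0 \<in> F" using F by blast
    have x0P: "x0 \<in> P" using x0 F face_of_imp_subset by blast
    have val: "(\<chi> j. real_of_int (w $ j)) \<bullet> x0 = (\<Sum>i\<in>T. u i * of_int (b $ i))"
      unfolding winner using x0 by (intro sum.cong) (auto simp: T_def tight_rows_def)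
    have le: "(\<chi> j. real_of_int (w $ j)) \<bullet> y \<le> (\<Sum>i\<in>T. u i * of_int (b $ i))" if "y \<in> P" for y
      unfolding winner using that u0 by (intro sum_mono mult_left_mono) (auto simp: inP)
    have mx: "is_max_sol P (\<chi> j. of_int (w $ j)) x0"
      unfolding is_max_sol_def using x0P le val by simp
    then have pS: "padic_rat p (Sup ((\<lambda>x. (\<chi> j. of_int (w $ j)) \<bullet> x) ` P))"
      using \<open>S5\<close> unfolding S5_def by blast
    have "Sup ((\<lambda>x. (\<chi> j. of_int (w $ j)) \<bullet> x) ` P) = (\<Sum>i\<in>T. u i * of_int (b $ i))"
    proof (rule cSup_eq_maximum)
      show "(\<Sum>i\<in>T. u i * of_int (b $ i)) \<in> (\<lambda>x. (\<chi> j. of_int (w $ j)) \<bullet> x) ` P"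
        by (rule image_eqI[where x=x0]) (use x0P val in auto)
    qed (use le in auto)
    also have "\<dots> = (\<Sum>i\<in>T. z $ i * of_int (b $ i)) + of_int k * (\<Sum>i\<in>T. of_int (b $ i))"
      by (simp add: u_def algebra_simps sum.distrib sum_distrib_left)
    finally have "(\<Sum>i\<in>T. z $ i * of_int (b $ i)) = Sup ((\<lambda>x. (\<chi> j. of_int (w $ j)) \<bullet> x) ` P) - of_int k * (\<Sum>i\<in>T. of_int (b $ i))"
      by simp
    moreover have "padic_rat p (of_int k * (\<Sum>i\<in>T. real_of_int (b $ i)))"
      by (rule padic_Ints) (simp add: Ints_mult Ints_sum)
    ultimately show "padic_rat p (\<Sum>i\<in>tight_rows A b F. z $ i * of_int (b $ i))"
      using padic_diff[OF p0 pS] unfolding T_def by simp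
  qed
  show ?thesis using i12 i23 i31 i14 i45 i53 by blast
qed

end
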